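(* Let $X$ be a set, $B\subseteq\mathbb{R}^X$ an $\mathbb{R}$-subalgebra and $Q\subseteq B$ a quadratic module with $K_{Q,X}=X$ and $m(X)=K_{Q,Y_B}$. Let $f\in\mathbb{R}^X$ and $A=B[f]\subseteq\mathbb{R}^X$. In each of the following cases, the restriction map $p\colon K_{Q',Y_A}\to K_{Q,Y_B}$ is injective, $K_{Q',X}=X$, and $m(X)=K_{Q',Y_A}$: (1) $f=\sqrt[r]{g}$ (pointwise real $r$-th root) with $r$ odd and $g\in B$, and $Q'$ is the quadratic module of $A$ generated by $Q$; (2) $f=\sqrt[s]{g}$ (pointwise nonnegative $s$-th root) with $s$ even, $g\in B$, $g\ge0$ on $X$, and $Q'$ is the quadratic module of $A$ generated by $Q$ and $f$; (3) $f=\frac1g$ with $g\in B$, $g(x)\ne0$ for all $x\in X$, and $Q'$ is the quadratic module of $A$ generated by $Q$; (4) $f=g\cdot\chi_{\{q\ge0\}}+h\cdot\chi_{\{q<0\}}$ for some $g,h,q\in B$ such that for $x\in X$, $q(x)=0$ implies $g(x)=h(x)$, and $Q'$ is the quadratic module of $A$ generated by $Q$ and $-q(f-g)^2$, $q(f-h)^2$.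
   Context: A quadratic module of a commutative unital $\mathbb{R}$-algebra $C$ is a subset $Q\subseteq C$ with $Q+Q\subseteq Q$, $c^2Q\subseteq Q$ for all $c\in C$, and $1\in Q$. For an $\mathbb{R}$-subalgebra $C\subseteq\mathbb{R}^X$ and a quadratic module $Q$ of $C$: $K_{Q,X}:=\{x\in X\mid g(x)\ge0\ \forall g\in Q\}$; $Y_C$ is the set of unital $\mathbb{R}$-algebra homomorphisms $C\to\mathbb{R}$, with the weakest topology making all maps $y\mapsto y(c)$ continuous; $K_{Q,Y_C}:=\{y\in Y_C\mid y(g)\ge0\ \forall g\in Q\}$; $m\colon X\to Y_C$, $m(x)(c)=c(x)$. The map $p\colon Y_A\to Y_B$ is restriction $y\mapsto y|_B$; it maps $K_{Q',Y_A}$ into $K_{Q,Y_B}$ whenever $Q'\cap B\supseteq Q$. $\chi_S$ denotes the characteristic function of $S\subseteq X$, and $\{q\ge0\}=\{x\in X\mid q(x)\ge0\}$, etc. *)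

theory Defs
  imports "HOL-Library.FuncSet" Complex_Main
begin

text \<open>The ambient set X is the type 'x; elements of R^X are functions 'x \<Rightarrow> real.\<close>

definition subalgebra :: "('x \<Rightarrow> real) set \<Rightarrow> bool" where
  "subalgebra A \<longleftrightarrow> (\<lambda>x. 1) \<in> A
     \<and> (\<forall>a\<in>A. \<forall>b\<in>A. (\<lambda>x. a x + b x) \<in> A \<and> (\<lambda>x. a x * b x) \<in> A)
     \<and> (\<forall>c::real. \<forall>a\<in>A. (\<lambda>x. c * a x) \<in> A)"

definition quadratic_module :: "('x \<Rightarrow> real) set \<Rightarrow> ('x \<Rightarrow> real) set \<Rightarrow> bool" where
  "quadratic_module C Q \<longleftrightarrow> Q \<subseteq> C
     \<and> (\<forall>a\<in>Q. \<forall>b\<in>Q. (\<lambda>x. a x + b x) \<in> Q)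
     \<and> (\<forall>c\<in>C. \<forall>a\<in>Q. (\<lambda>x. (c x)^2 * a x) \<in> Q)
     \<and> (\<lambda>x. 1) \<in> Q"

text \<open>Y_C: unital R-algebra homomorphisms C \<rightarrow> R, represented extensionally on C.\<close>
definition char_space :: "('x \<Rightarrow> real) set \<Rightarrow> (('x \<Rightarrow> real) \<Rightarrow> real) set" where
  "char_space C = {y \<in> extensional C.
     (\<forall>a\<in>C. \<forall>b\<in>C. y (\<lambda>x. a x + b x) = y a + y b \<and> y (\<lambda>x. a x * b x) = y a * y b)
     \<and> (\<forall>c::real. \<forall>a\<in>C. y (\<lambda>x. c * a x) = c * y a)
     \<and> y (\<lambda>x. 1) = 1}"

definition KX :: "('x \<Rightarrow> real) set \<Rightarrow> 'x set" where
  "KX Q = {x. \<forall>g\<in>Q. 0 \<le> g x}"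

definition KY :: "('x \<Rightarrow> real) set \<Rightarrow> ('x \<Rightarrow> real) set \<Rightarrow> (('x \<Rightarrow> real) \<Rightarrow> real) set" where
  "KY C Q = {y \<in> char_space C. \<forall>g\<in>Q. 0 \<le> y g}"

definition evalm :: "('x \<Rightarrow> real) set \<Rightarrow> 'x \<Rightarrow> (('x \<Rightarrow> real) \<Rightarrow> real)" where
  "evalm C x = restrict (\<lambda>c. c x) C"

definition gen_alg :: "('x \<Rightarrow> real) set \<Rightarrow> ('x \<Rightarrow> real) set \<Rightarrow> ('x \<Rightarrow> real) set" where
  "gen_alg B S = \<Inter>{A. subalgebra A \<and> B \<subseteq> A \<and> S \<subseteq> A}"

definition gen_qm :: "('x \<Rightarrow> real) set \<Rightarrow> ('x \<Rightarrow> real) set \<Rightarrow> ('x \<Rightarrow> real) set" where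
  "gen_qm A S = \<Inter>{Q. quadratic_module A Q \<and> S \<subseteq> Q}"

definition prop_concl :: "('x \<Rightarrow> real) set \<Rightarrow> ('x \<Rightarrow> real) set \<Rightarrow> ('x \<Rightarrow> real) set \<Rightarrow> bool" where
  "prop_concl B A Q' \<longleftrightarrow> inj_on (\<lambda>y. restrict y B) (KY A Q')
     \<and> KX Q' = UNIV \<and> range (evalm A) = KY A Q'"

end

theory Submission
  imports Defs
begin


lemma sa_one: "subalgebra A \<Longrightarrow> (\<lambda>x. 1) \<in> A" by (simp add: subalgebra_def)
lemma sa_add: "subalgebra A \<Longrightarrow> a \<in> A \<Longrightarrow> b \<in> A \<Longrightarrow> (\<lambda>x. a x + b x) \<in> A" by (simp add: subalgebra_def)
lemma sa_mult: "subalgebra A \<Longrightarrow> a \<in> A \<Longrightarrow> b \<in> A \<Longrightarrow> (\<lambda>x. a x * b x) \<in> A" by (simp add: subalgebra_def)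
lemma sa_smult: "subalgebra A \<Longrightarrow> a \<in> A \<Longrightarrow> (\<lambda>x. c * a x) \<in> A" by (simp add: subalgebra_def)
lemma sa_const: "subalgebra A \<Longrightarrow> (\<lambda>x. c) \<in> A"
  using sa_smult[of A "\<lambda>x. 1" c] sa_one[of A] by simp
lemma sa_neg: "subalgebra A \<Longrightarrow> a \<in> A \<Longrightarrow> (\<lambda>x. - a x) \<in> A"
  using sa_smult[of A a "-1"] by simp
lemma sa_sub: "subalgebra A \<Longrightarrow> a \<in> A \<Longrightarrow> b \<in> A \<Longrightarrow> (\<lambda>x. a x - b x) \<in> A"
  using sa_add[of A a "\<lambda>x. - b x"] sa_neg[of A b] by simp
lemma sa_pow: "subalgebra A \<Longrightarrow> a \<in> A \<Longrightarrow> (\<lambda>x. a x ^ n) \<in> A"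
proof (induction n)
  case 0 then show ?case by (simp add: sa_one)
next
  case (Suc n) then show ?case using sa_mult[of A a "\<lambda>x. a x ^ n"] by simp
qed

lemmas sa_closed = sa_one sa_add sa_mult sa_smult sa_const sa_neg sa_sub sa_pow

lemma ch_add: "y \<in> char_space A \<Longrightarrow> a \<in> A \<Longrightarrow> b \<in> A \<Longrightarrow> y (\<lambda>x. a x + b x) = y a + y b"
  by (simp add: char_space_def)
lemma ch_mult: "y \<in> char_space A \<Longrightarrow> a \<in> A \<Longrightarrow> b \<in> A \<Longrightarrow> y (\<lambda>x. a x * b x) = y a * y b"
  by (simp add: char_space_def)
lemma ch_smult: "y \<in> char_space A \<Longrightarrow> a \<in> A \<Longrightarrow> y (\<lambda>x. c * a x) = c * y a"
  by (simp add: char_space_def)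
lemma ch_one: "y \<in> char_space A \<Longrightarrow> y (\<lambda>x. 1) = 1"
  by (simp add: char_space_def)
lemma ch_const: "subalgebra A \<Longrightarrow> y \<in> char_space A \<Longrightarrow> y (\<lambda>x. c) = c"
  using ch_smult[of y A "\<lambda>x. 1" c] ch_one[of y A] sa_one[of A] by simp
lemma ch_neg: "subalgebra A \<Longrightarrow> y \<in> char_space A \<Longrightarrow> a \<in> A \<Longrightarrow> y (\<lambda>x. - a x) = - y a"
  using ch_smult[of y A a "-1"] by simp
lemma ch_sub: "subalgebra A \<Longrightarrow> y \<in> char_space A \<Longrightarrow> a \<in> A \<Longrightarrow> b \<in> A \<Longrightarrow> y (\<lambda>x. a x - b x) = y a - y b"
  using ch_add[of y A a "\<lambda>x. - b x"] ch_neg[of A y b] sa_neg[of A b] by simp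
lemma ch_pow: "subalgebra A \<Longrightarrow> y \<in> char_space A \<Longrightarrow> a \<in> A \<Longrightarrow> y (\<lambda>x. a x ^ n) = y a ^ n"
proof (induction n)
  case 0 then show ?case by (simp add: ch_one)
next
  case (Suc n) then show ?case using ch_mult[of y A a "\<lambda>x. a x ^ n"] sa_pow[of A a n] by simp
qed

lemma gen_alg_sa: "subalgebra (gen_alg B S)"
  by (auto simp: subalgebra_def gen_alg_def)
lemma gen_alg_B: "B \<subseteq> gen_alg B S" by (auto simp: gen_alg_def)
lemma gen_alg_S: "S \<subseteq> gen_alg B S" by (auto simp: gen_alg_def)
lemma gen_alg_min: "subalgebra E \<Longrightarrow> B \<subseteq> E \<Longrightarrow> S \<subseteq> E \<Longrightarrow> gen_alg B S \<subseteq> E"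
  by (auto simp: gen_alg_def)
lemma gen_qm_G: "G \<subseteq> gen_qm A G" by (auto simp: gen_qm_def)
lemma gen_qm_min: "quadratic_module A P \<Longrightarrow> G \<subseteq> P \<Longrightarrow> gen_qm A G \<subseteq> P"
  by (auto simp: gen_qm_def)

lemma main:
  assumes sB: "subalgebra B" and qB: "quadratic_module B Q" and KQ: "KX Q = UNIV"
    and mB: "range (evalm B) = KY B Q"
    and QG: "Q \<subseteq> G" and GA: "G \<subseteq> gen_alg B {f}" and Gpos: "\<forall>a\<in>G. \<forall>x. 0 \<le> a x"
    and key: "\<And>y x. y \<in> char_space (gen_alg B {f}) \<Longrightarrow> (\<forall>a\<in>G. 0 \<le> y a)
               \<Longrightarrow> (\<forall>b\<in>B. y b = b x) \<Longrightarrow> y f = f x"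
  shows "prop_concl B (gen_alg B {f}) (gen_qm (gen_alg B {f}) G)"
proof -
  define A where "A = gen_alg B {f}"
  define Q' where "Q' = gen_qm A G"
  have sA: "subalgebra A" unfolding A_def by (rule gen_alg_sa)
  have BA: "B \<subseteq> A" unfolding A_def by (rule gen_alg_B)
  have fA: "f \<in> A" unfolding A_def using gen_alg_S by blast
  have GQ': "G \<subseteq> Q'" unfolding Q'_def by (rule gen_qm_G)
  have qmP: "quadratic_module A {a\<in>A. \<forall>x. 0 \<le> a x}"
    unfolding quadratic_module_def using sA by (auto intro: sa_closed)
  have P: "Q' \<subseteq> {a\<in>A. \<forall>x. 0 \<le> a x}"
    unfolding Q'_def using qmP GA Gpos A_def by (intro gen_qm_min) auto
  have KX': "KX Q' = UNIV" using P by (auto simp: KX_def)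
  have evA: "evalm A x \<in> char_space A" for x
    unfolding char_space_def evalm_def using sA by (auto intro: sa_closed)
  have det: "y1 = y2" if y1: "y1 \<in> char_space A" and y2: "y2 \<in> char_space A"
     and eB: "\<forall>b\<in>B. y1 b = y2 b" and ef: "y1 f = y2 f" for y1 y2
  proof -
    define E where "E = {a\<in>A. y1 a = y2 a}"
    have "subalgebra E" unfolding subalgebra_def E_def
      using sA y1 y2 by (auto intro: sa_closed simp: ch_add ch_mult ch_smult ch_one)
    moreover have "B \<subseteq> E" using BA eB E_def by auto
    moreover have "{f} \<subseteq> E" using fA ef E_def by auto
    ultimately have "A \<subseteq> E" unfolding A_def by (rule gen_alg_min)
    moreover have "y1 \<in> extensional A" "y2 \<in> extensional A" using y1 y2 by (auto simp: char_space_def)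
    ultimately show ?thesis
    proof (intro ext)
      fix a assume AE: "A \<subseteq> E" and e1: "y1 \<in> extensional A" and e2: "y2 \<in> extensional A"
      show "y1 a = y2 a"
      proof (cases "a \<in> A")
        case True then show ?thesis using AE E_def by auto
      next
        case False then show ?thesis using e1 e2 by (simp add: extensional_def)
      qed
    qed
  qed
  have step: "y = evalm A x" if y: "y \<in> KY A Q'" and r: "restrict y B = evalm B x" for y x
  proof -
    have yc: "y \<in> char_space A" using y by (simp add: KY_def)
    have yB: "\<forall>b\<in>B. y b = b x"
    proof
      fix b assume "b \<in> B"
      then show "y b = b x" using fun_cong[OF r, of b] by (simp add: evalm_def)
    qed
    have "\<forall>a\<in>G. 0 \<le> y a" using y GQ' by (auto simp: KY_def)
    then have yf: "y f = f x" using key[OF yc[unfolded A_def]] yB by blast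
    show ?thesis
      apply (rule det[OF yc evA])
      using yB yf BA fA by (auto simp: evalm_def)
  qed
  have ex: "\<exists>x. restrict y B = evalm B x" if y: "y \<in> KY A Q'" for y
  proof -
    have yc: "y \<in> char_space A" using y by (simp add: KY_def)
    have "restrict y B \<in> char_space B"
      unfolding char_space_def
    proof (intro CollectI conjI ballI allI)
      show "restrict y B \<in> extensional B" by simp
      show "restrict y B (\<lambda>x. 1) = 1" using sa_one[OF sB] ch_one[OF yc] by simp
    next
      fix a b assume ab: "a \<in> B" "b \<in> B"
      then have ab': "a \<in> A" "b \<in> A" using BA by auto
      show "restrict y B (\<lambda>x. a x + b x) = restrict y B a + restrict y B b"
        using ab sa_add[OF sB ab] ch_add[OF yc ab'] by simp
      show "restrict y B (\<lambda>x. a x * b x) = restrict y B a * restrict y B b"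
        using ab sa_mult[OF sB ab] ch_mult[OF yc ab'] by simp
    next
      fix c :: real and a assume a: "a \<in> B"
      then have a': "a \<in> A" using BA by auto
      show "restrict y B (\<lambda>x. c * a x) = c * restrict y B a"
        using a sa_smult[OF sB a] ch_smult[OF yc a'] by simp
    qed
    moreover have "\<forall>g\<in>Q. 0 \<le> restrict y B g"
      using y QG GQ' qB by (auto simp: KY_def quadratic_module_def)
    ultimately have "restrict y B \<in> KY B Q" by (simp add: KY_def)
    then show ?thesis using mB by (metis imageE)
  qed
  have inj: "inj_on (\<lambda>y. restrict y B) (KY A Q')"
  proof (rule inj_onI)
    fix y1 y2 assume a: "y1 \<in> KY A Q'" "y2 \<in> KY A Q'" "restrict y1 B = restrict y2 B"
    obtain x where x: "restrict y1 B = evalm B x" using ex[OF a(1)] by blast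
    show "y1 = y2" using step[OF a(1) x] step[OF a(2)] x a(3) by simp
  qed
  have rng: "range (evalm A) = KY A Q'"
  proof
    show "range (evalm A) \<subseteq> KY A Q'"
      using evA P by (auto simp: KY_def evalm_def)
    show "KY A Q' \<subseteq> range (evalm A)" using ex step by blast
  qed
  show ?thesis unfolding prop_concl_def using inj KX' rng A_def Q'_def by simp
qed



lemma KX_pos: "KX Q = UNIV \<Longrightarrow> \<forall>a\<in>Q. \<forall>x. 0 \<le> a x"
  by (auto simp: KX_def)

lemma QB: "quadratic_module B Q \<Longrightarrow> Q \<subseteq> gen_alg B S"
  using gen_alg_B by (auto simp: quadratic_module_def)

lemma fin_alg: "f \<in> gen_alg B {f}" using gen_alg_S by blast

context
  fixes B Q :: "('x \<Rightarrow> real) set"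
  assumes a1: "subalgebra B"
    and a2: "quadratic_module B Q"
    and a3: "KX Q = UNIV"
    and a4: "range (evalm B) = KY B Q"
begin

lemma case1:
  assumes r: "odd r" and g: "g \<in> B"
  shows "prop_concl B (gen_alg B {\<lambda>x. root r (g x)}) (gen_qm (gen_alg B {\<lambda>x. root r (g x)}) Q)"
proof (rule main[OF a1 a2 a3 a4 order.refl QB[OF a2] KX_pos[OF a3]])
  fix y x
  define f where "f = (\<lambda>x. root r (g x))"
  assume y: "y \<in> char_space (gen_alg B {\<lambda>x. root r (g x)})" and yB: "\<forall>b\<in>B. y b = b x"
  have fg: "(\<lambda>x. f x ^ r) = g" using r by (simp add: f_def odd_real_root_pow)
  have "y (\<lambda>x. f x ^ r) = y f ^ r"
    using ch_pow[OF gen_alg_sa y] fin_alg unfolding f_def by blast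
  then have "y f ^ r = g x" using fg yB g by simp
  then show "y (\<lambda>x. root r (g x)) = root r (g x)"
    using odd_real_root_unique[OF r] f_def by metis
qed

lemma case2:
  assumes s: "even s" "0 < s" and g: "g \<in> B" "\<forall>x. 0 \<le> g x"
  shows "prop_concl B (gen_alg B {\<lambda>x. root s (g x)}) (gen_qm (gen_alg B {\<lambda>x. root s (g x)}) (Q \<union> {\<lambda>x. root s (g x)}))"
proof (rule main[OF a1 a2 a3 a4])
  show "Q \<subseteq> Q \<union> {\<lambda>x. root s (g x)}" by blast
  show "Q \<union> {\<lambda>x. root s (g x)} \<subseteq> gen_alg B {\<lambda>x. root s (g x)}"
    using QB[OF a2] fin_alg by blast
  show "\<forall>a\<in>Q \<union> {\<lambda>x. root s (g x)}. \<forall>x. 0 \<le> a x"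
    using KX_pos[OF a3] g by (auto intro: real_root_ge_zero)
  fix y x
  define f where "f = (\<lambda>x. root s (g x))"
  assume y: "y \<in> char_space (gen_alg B {\<lambda>x. root s (g x)})" and yB: "\<forall>b\<in>B. y b = b x"
    and yG: "\<forall>a\<in>Q \<union> {\<lambda>x. root s (g x)}. 0 \<le> y a"
  have fg: "(\<lambda>x. f x ^ s) = g" using s g by (simp add: f_def)
  have "y (\<lambda>x. f x ^ s) = y f ^ s"
    using ch_pow[OF gen_alg_sa y] fin_alg unfolding f_def by blast
  then have "y f ^ s = g x" using fg yB g by simp
  moreover have "0 \<le> y f" using yG f_def by simp
  ultimately have "y f = root s (g x)" using real_root_power_cancel[OF s(2)] by metis
  then show "y (\<lambda>x. root s (g x)) = root s (g x)" by (simp add: f_def)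
qed

lemma case3:
  assumes g: "g \<in> B" "\<forall>x. g x \<noteq> 0"
  shows "prop_concl B (gen_alg B {\<lambda>x. 1 / g x}) (gen_qm (gen_alg B {\<lambda>x. 1 / g x}) Q)"
proof (rule main[OF a1 a2 a3 a4 order.refl QB[OF a2] KX_pos[OF a3]])
  fix y x
  define f where "f = (\<lambda>x. 1 / g x)"
  assume y: "y \<in> char_space (gen_alg B {\<lambda>x. 1 / g x})" and yB: "\<forall>b\<in>B. y b = b x"
  have fg: "(\<lambda>x. f x * g x) = (\<lambda>x. 1)" using g by (simp add: f_def)
  have gA: "g \<in> gen_alg B {f}" using g gen_alg_B by blast
  have "y (\<lambda>x. f x * g x) = y f * y g"
    using ch_mult[OF y] fin_alg gA unfolding f_def by blast
  then have "y f * g x = 1" using fg yB g ch_one[OF y] by simp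
  then have "y f = 1 / g x" using g by (simp add: field_simps)
  then show "y (\<lambda>x. 1 / g x) = 1 / g x" by (simp add: f_def)
qed

lemma case4:
  fixes g h q :: "'x \<Rightarrow> real"
  defines "f \<equiv> (\<lambda>x. if 0 \<le> q x then g x else h x)"
  assumes g: "g \<in> B" "h \<in> B" "q \<in> B" "\<forall>x. q x = 0 \<longrightarrow> g x = h x"
  shows "prop_concl B (gen_alg B {f}) (gen_qm (gen_alg B {f}) (Q \<union> {(\<lambda>x. - q x * (f x - g x)^2), (\<lambda>x. q x * (f x - h x)^2)}))"
proof (rule main[OF a1 a2 a3 a4])
  define A where "A = gen_alg B {f}"
  have sA: "subalgebra A" unfolding A_def by (rule gen_alg_sa)
  have fA: "f \<in> A" unfolding A_def by (rule fin_alg)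
  have BA: "g \<in> A" "h \<in> A" "q \<in> A" using g gen_alg_B A_def by auto
  show "Q \<subseteq> Q \<union> {(\<lambda>x. - q x * (f x - g x)^2), (\<lambda>x. q x * (f x - h x)^2)}" by blast
  have n1: "(\<lambda>x. - q x * (f x - g x)^2) \<in> A" using sA fA BA by (intro sa_closed)
  have n2: "(\<lambda>x. q x * (f x - h x)^2) \<in> A" using sA fA BA by (intro sa_closed)
  show "Q \<union> {(\<lambda>x. - q x * (f x - g x)^2), (\<lambda>x. q x * (f x - h x)^2)} \<subseteq> gen_alg B {f}"
    using QB[OF a2] n1 n2 A_def by blast
  have p1: "0 \<le> - q x * (f x - g x)^2" for x
    by (cases "0 \<le> q x") (auto simp: f_def intro: mult_nonpos_nonneg)
  have p2: "0 \<le> q x * (f x - h x)^2" for x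
    by (cases "0 \<le> q x") (auto simp: f_def)
  show "\<forall>a\<in>Q \<union> {(\<lambda>x. - q x * (f x - g x)^2), (\<lambda>x. q x * (f x - h x)^2)}. \<forall>x. 0 \<le> a x"
    using KX_pos[OF a3] p1 p2 by auto
  fix y x
  assume y: "y \<in> char_space (gen_alg B {f})" and yB: "\<forall>b\<in>B. y b = b x"
    and yG: "\<forall>a\<in>Q \<union> {(\<lambda>x. - q x * (f x - g x)^2), (\<lambda>x. q x * (f x - h x)^2)}. 0 \<le> y a"
  have yA: "y \<in> char_space A" using y A_def by simp
  have yg: "y g = g x" "y h = h x" "y q = q x" using yB g by auto
  have z: "(\<lambda>x. (f x - g x) * (f x - h x)) = (\<lambda>x. 0)"
    by (auto simp: f_def)
  have "y (\<lambda>x. (f x - g x) * (f x - h x)) = (y f - g x) * (y f - h x)"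
    using sA yA fA BA yg by (simp add: ch_mult[OF yA] ch_sub[OF sA yA] sa_sub)
  then have "(y f - g x) * (y f - h x) = 0" using z ch_const[OF sA yA] by simp
  then have yf: "y f = g x \<or> y f = h x" by simp
  have e1: "y (\<lambda>x. - q x * (f x - g x)^2) = - q x * (y f - g x)^2"
  proof -
    have "y (\<lambda>x. - q x * (f x - g x)^2) = y (\<lambda>x. - q x) * y (\<lambda>x. (f x - g x)^2)"
      by (rule ch_mult[OF yA sa_neg[OF sA BA(3)] sa_pow[OF sA sa_sub[OF sA fA BA(1)]]])
    also have "\<dots> = - q x * (y f - g x)^2"
      using sA yA fA BA yg by (simp add: ch_sub[OF sA yA] ch_neg[OF sA yA] ch_pow[OF sA yA] sa_sub)
    finally show ?thesis .
  qed
  have e2: "y (\<lambda>x. q x * (f x - h x)^2) = q x * (y f - h x)^2"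
    using sA yA fA BA yg by (simp add: ch_mult[OF yA] ch_sub[OF sA yA] ch_pow[OF sA yA] sa_sub sa_pow)
  have i1: "0 \<le> - q x * (y f - g x)^2" using yG e1 by simp
  have i2: "0 \<le> q x * (y f - h x)^2" using yG e2 by simp
  show "y f = f x"
  proof (cases "g x = h x")
    case True then show ?thesis using yf by (auto simp: f_def)
  next
    case False
    then have qn: "q x \<noteq> 0" using g(4) by auto
    show ?thesis
    proof (cases "0 < q x")
      case True
      have "y f = g x"
      proof (rule ccontr)
        assume "y f \<noteq> g x"
        then have "0 < (y f - g x)^2" by simp
        then have "0 < q x * (y f - g x)^2" using True by simp
        then show False using i1 by simp
      qed
      then show ?thesis using True by (simp add: f_def)
    next
      case False
      then have qneg: "q x < 0" using qn by simp
      have "y f = h x"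
      proof (rule ccontr)
        assume "y f \<noteq> h x"
        then have "0 < (y f - h x)^2" by simp
        then have "q x * (y f - h x)^2 < 0" using qneg mult_neg_pos by blast
        then show False using i2 by simp
      qed
      then show ?thesis using qneg by (simp add: f_def)
    qed
  qed
qed

end


theorem proposition3p1:
  fixes B Q :: "('x \<Rightarrow> real) set"
  assumes "subalgebra B"
    and "quadratic_module B Q"
    and "KX Q = UNIV"
    and "range (evalm B) = KY B Q"
  shows
    "(\<forall>r g. odd r \<and> g \<in> B \<longrightarrow>
       (let f = (\<lambda>x. root r (g x)); A = gen_alg B {f}
        in prop_concl B A (gen_qm A Q)))
   \<and> (\<forall>s g. even s \<and> 0 < s \<and> g \<in> B \<and> (\<forall>x. 0 \<le> g x) \<longrightarrow>
       (let f = (\<lambda>x. root s (g x)); A = gen_alg B {f}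
        in prop_concl B A (gen_qm A (Q \<union> {f}))))
   \<and> (\<forall>g. g \<in> B \<and> (\<forall>x. g x \<noteq> 0) \<longrightarrow>
       (let f = (\<lambda>x. 1 / g x); A = gen_alg B {f}
        in prop_concl B A (gen_qm A Q)))
   \<and> (\<forall>g h q. g \<in> B \<and> h \<in> B \<and> q \<in> B \<and> (\<forall>x. q x = 0 \<longrightarrow> g x = h x) \<longrightarrow>
       (let f = (\<lambda>x. if 0 \<le> q x then g x else h x); A = gen_alg B {f}
        in prop_concl B A (gen_qm A (Q \<union> {(\<lambda>x. - q x * (f x - g x)^2), (\<lambda>x. q x * (f x - h x)^2)}))))"
  proof (intro conjI allI impI)
  fix r :: nat and g assume "odd r \<and> g \<in> B"
  then show "let f = (\<lambda>x. root r (g x)); A = gen_alg B {f} in prop_concl B A (gen_qm A Q)"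
    using case1[OF assms] by (simp add: Let_def)
next
  fix s :: nat and g assume "even s \<and> 0 < s \<and> g \<in> B \<and> (\<forall>x. 0 \<le> g x)"
  then show "let f = (\<lambda>x. root s (g x)); A = gen_alg B {f} in prop_concl B A (gen_qm A (Q \<union> {f}))"
    using case2[OF assms] by (simp add: Let_def)
next
  fix g :: "'x \<Rightarrow> real" assume "g \<in> B \<and> (\<forall>x. g x \<noteq> 0)"
  then show "let f = (\<lambda>x. 1 / g x); A = gen_alg B {f} in prop_concl B A (gen_qm A Q)"
    using case3[OF assms] by (simp add: Let_def)
next
  fix g h q :: "'x \<Rightarrow> real"
  assume "g \<in> B \<and> h \<in> B \<and> q \<in> B \<and> (\<forall>x. q x = 0 \<longrightarrow> g x = h x)"
  then show "let f = (\<lambda>x. if 0 \<le> q x then g x else h x); A = gen_alg B {f}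
        in prop_concl B A (gen_qm A (Q \<union> {(\<lambda>x. - q x * (f x - g x)^2), (\<lambda>x. q x * (f x - h x)^2)}))"
    using case4[OF assms] by (simp add: Let_def)
qed


end
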